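(* Let $s_1\ge\dots\ge s_p$ be the eigenvalues of $\widehat\Sigma$ and $v_1,\dots,v_p$ corresponding orthonormal eigenvectors. Let $\lambda>0$ satisfy $$\lambda\sum_{j=i}^p s_j\langle\beta_0,v_j\rangle^2\ge\frac{\sigma^2}{n}\sum_{j=i}^ps_j\qquad\text{for all } i=1,\dots,p.$$ Then the map $t\mapsto\mathcal{R}^{\mathrm{in}}_{\lambda,\beta_0}(\hat\beta^{\mathrm{GF}}_{\lambda,t})$ is monotonically decreasing on $[0,\infty)$.
   Context: Let $n,p\in\mathbb{N}$. Observations $(x_i,y_i)$, $i=1,\dots,n$, are i.i.d. with $x_i\in\mathbb{R}^p$, $y_i\in\mathbb{R}$, $y_i=x_i^\top\beta_0+\varepsilon_i$, $\mathbb{E}[\varepsilon_i\mid x_i]=0$, $\operatorname{Var}(\varepsilon_i\mid x_i)=\sigma^2>0$. $X\in\mathbb{R}^{n\times p}$ has rows $x_i^\top$, $y=(y_i)$; assume $\beta_0=X^+X\beta_0$. Matrix functions are defined by functional calculus. $\widehat\Sigma=\frac1nX^\top X$, $\widehat\Sigma_\lambda=\widehat\Sigma+\lambda I_p$, $y_\lambda=\frac1n\widehat\Sigma_\lambda^{-1/2}X^\top y$. Gradient flow estimator for the ridge criterion $\frac1{2n}\|y-X\beta\|^2+\frac\lambda2\|\beta\|^2$: $\hat\beta^{\mathrm{GF}}_{\lambda,t}=\widehat\Sigma_\lambda^{-1/2}(I_p-\exp(-t\widehat\Sigma_\lambda))y_\lambda$, $t\ge0$. For an estimator $\hat\beta$: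 $\mathcal{R}^{\mathrm{in}}_{\lambda,\beta_0}(\hat\beta)=\mathbb{E}[\|\widehat\Sigma_\lambda^{1/2}(\hat\beta-\beta_0)\|^2\mid X]$. *)

theory Defs
  imports "HOL-Probability.Probability"
begin

definition eigvals :: "real^'n^'n \<Rightarrow> real set" where
  "eigvals A = {\<mu>. \<exists>x. x \<noteq> 0 \<and> A *v x = \<mu> *\<^sub>R x}"

(* Functional calculus f(A) for a real symmetric (hence orthogonally diagonalisable) matrix A:
   f(A) = sum over eigenvalues mu of f(mu) times the spectral projection onto the eigenspace of mu,
   the spectral projection being written as the Lagrange product prod_{nu <> mu} (A - nu I)/(mu - nu).
   For A = sum_j mu_j v_j v_j^T this equals sum_j f(mu_j) v_j v_j^T. *)
definition matfun :: "(real \<Rightarrow> real) \<Rightarrow> real^'n^'n \<Rightarrow> real^'n^'n" where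
  "matfun f A = (\<Sum>\<mu>\<in>eigvals A. f \<mu> *\<^sub>R
      foldr (\<lambda>\<nu> B. ((1 / (\<mu> - \<nu>)) *\<^sub>R (A - mat \<nu>)) ** B)
            (sorted_list_of_set (eigvals A - {\<mu>})) (mat 1))"

(* X has n = CARD('n) rows x_i^T and p = CARD('p) columns *)
definition Sigma_hat :: "real^'p^'n \<Rightarrow> real^'p^'p" where
  "Sigma_hat X = (1 / real CARD('n)) *\<^sub>R (transpose X ** X)"

definition Sigma_lam :: "real^'p^'n \<Rightarrow> real \<Rightarrow> real^'p^'p" where
  "Sigma_lam X lam = Sigma_hat X + lam *\<^sub>R mat 1"

definition y_lam :: "real^'p^'n \<Rightarrow> real \<Rightarrow> real^'n \<Rightarrow> real^'p" where
  "y_lam X lam y = (1 / real CARD('n)) *\<^sub>R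
      (matfun (\<lambda>x. 1 / sqrt x) (Sigma_lam X lam) *v (transpose X *v y))"

definition beta_GF :: "real^'p^'n \<Rightarrow> real \<Rightarrow> real \<Rightarrow> real^'n \<Rightarrow> real^'p" where
  "beta_GF X lam t y = matfun (\<lambda>x. 1 / sqrt x) (Sigma_lam X lam) *v
      ((mat 1 - matfun (\<lambda>x. exp (- t * x)) (Sigma_lam X lam)) *v y_lam X lam y)"

(* in-sample risk; the conditioning on X is modelled by X being a fixed (deterministic) matrix
   and the estimator being a random variable over the noise probability space M *)
definition risk_in :: "'a measure \<Rightarrow> real^'p^'n \<Rightarrow> real \<Rightarrow> real^'p \<Rightarrow> ('a \<Rightarrow> real^'p) \<Rightarrow> real" where
  "risk_in M X lam beta0 bhat =
     (\<integral>\<omega>. (norm (matfun sqrt (Sigma_lam X lam) *v (bhat \<omega> - beta0)))\<^sup>2 \<partial>M)"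

end

theory Submission
  imports Defs
begin

lemma orth_expand:
  fixes v :: "nat \<Rightarrow> real^'p"
  assumes orth: "\<And>i j. i \<in> {1..CARD('p)} \<Longrightarrow> j \<in> {1..CARD('p)} \<Longrightarrow>
                 v i \<bullet> v j = (if i = j then 1 else 0)"
  shows "x = (\<Sum>j\<in>{1..CARD('p)}. (x \<bullet> v j) *\<^sub>R v j)"
proof -
  define J where "J = {1..CARD('p)}"
  have inj: "inj_on v J"
    by (rule inj_onI) (metis J_def orth zero_neq_one)
  have card: "card (v ` J) = CARD('p)"
    using card_image[OF inj] by (simp add: J_def)
  have n0: "0 \<notin> v ` J"
    using orth J_def by force
  have po: "pairwise orthogonal (v ` J)"
    unfolding pairwise_def orthogonal_def using orth J_def by auto
  have ind: "independent (v ` J)"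
    by (rule pairwise_orthogonal_independent[OF po n0])
  have sp: "UNIV \<subseteq> span (v ` J)"
    by (rule card_ge_dim_independent[OF _ ind]) (simp_all add: card)
  define y where "y = x - (\<Sum>j\<in>J. (x \<bullet> v j) *\<^sub>R v j)"
  have yv: "y \<bullet> v k = 0" if "k \<in> J" for k
  proof -
    have "(\<Sum>j\<in>J. (x \<bullet> v j) *\<^sub>R v j) \<bullet> v k = (\<Sum>j\<in>J. (x \<bullet> v j) * (v j \<bullet> v k))"
      by (simp add: inner_sum_left)
    also have "\<dots> = (\<Sum>j\<in>J. if j = k then x \<bullet> v j else 0)"
      by (rule sum.cong) (use that orth J_def in auto)
    also have "\<dots> = x \<bullet> v k" using that J_def by simp
    finally show ?thesis unfolding y_def by (simp add: inner_diff_left)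
  qed
  have "orthogonal y y"
    by (rule orthogonal_to_span[of y "v ` J"]) (use sp yv in \<open>auto simp: orthogonal_def\<close>)
  hence "y = 0" by (simp add: orthogonal_def)
  thus ?thesis unfolding y_def J_def by simp
qed

lemma mat_mult_vec: "(mat c :: real^'p^'p) *v x = c *\<^sub>R x"
proof -
  have "\<And>i. (\<Sum>j\<in>UNIV. (if i = j then c else 0) * x $ j) = c * x $ i"
    by (simp add: if_distrib[of "\<lambda>z. z * _"] cong: if_cong)
  then show ?thesis by (simp add: vec_eq_iff matrix_vector_mult_def mat_def)
qed

lemma matrix_vector_sum: "(A :: real^'p^'q) *v (sum F S) = (\<Sum>i\<in>S. A *v F i)"
  by (induction S rule: infinite_finite_induct) (simp_all add: matrix_vector_right_distrib)

lemma sum_matrix_vector: "(sum F S :: real^'p^'q) *v x = (\<Sum>i\<in>S. F i *v x)"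
  by (induction S rule: infinite_finite_induct) (simp_all add: matrix_vector_mult_add_rdistrib)

lemma foldr_eigvec:
  fixes A :: "real^'p^'p"
  assumes "A *v w = mk *\<^sub>R w"
  shows "foldr (\<lambda>\<nu> B. ((1 / (m - \<nu>)) *\<^sub>R (A - mat \<nu>)) ** B) L (mat 1) *v w
        = prod_list (map (\<lambda>\<nu>. (mk - \<nu>) / (m - \<nu>)) L) *\<^sub>R w"
proof (induction L)
  case Nil
  then show ?case by simp
next
  case (Cons a L)
  define P where "P = prod_list (map (\<lambda>\<nu>. (mk - \<nu>) / (m - \<nu>)) L)"
  have h0: "foldr (\<lambda>\<nu> B. ((1 / (m - \<nu>)) *\<^sub>R (A - mat \<nu>)) ** B) (a # L) (mat 1) *v w
     = (1 / (m - a)) *\<^sub>R ((A - mat a) *v (P *\<^sub>R w))"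
    by (simp add: matrix_vector_mul_assoc[symmetric] scaleR_matrix_vector_assoc[symmetric]
        Cons P_def)
  also have h: "(A - mat a) *v (P *\<^sub>R w) = (P * mk - P * a) *\<^sub>R w"
    by (simp add: matrix_vector_mult_diff_rdistrib matrix_vector_mult_scaleR assms mat_mult_vec
       scaleR_diff_left scaleR_diff_right)
  have "(1 / (m - a)) *\<^sub>R ((A - mat a) *v (P *\<^sub>R w)) = ((mk - a) / (m - a) * P) *\<^sub>R w"
    unfolding h scaleR_scaleR
    by (rule arg_cong[where f="\<lambda>c. c *\<^sub>R w"]) (simp add: divide_inverse algebra_simps)
  with h0 show ?case by (simp add: P_def)
qed

lemma matfun_eigvec:
  fixes A :: "real^'p^'p" and v :: "nat \<Rightarrow> real^'p" and mu :: "nat \<Rightarrow> real"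
  assumes orth: "\<And>i j. i \<in> {1..CARD('p)} \<Longrightarrow> j \<in> {1..CARD('p)} \<Longrightarrow>
                 v i \<bullet> v j = (if i = j then 1 else 0)"
    and eigA: "\<And>j. j \<in> {1..CARD('p)} \<Longrightarrow> A *v v j = mu j *\<^sub>R v j"
    and k: "k \<in> {1..CARD('p)}"
  shows "matfun f A *v v k = f (mu k) *\<^sub>R v k"
proof -
  define J where "J = {1..CARD('p)}"
  have sub: "eigvals A \<subseteq> mu ` J"
  proof
    fix m assume "m \<in> eigvals A"
    then obtain x where x0: "x \<noteq> 0" and Ax: "A *v x = m *\<^sub>R x" unfolding eigvals_def by auto
    show "m \<in> mu ` J"
    proof (rule ccontr)
      assume nm: "m \<notin> mu ` J"
      have ex: "x = (\<Sum>j\<in>J. (x \<bullet> v j) *\<^sub>R v j)" using orth_expand[OF orth] J_def by blast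
      have "A *v x = (\<Sum>j\<in>J. (x \<bullet> v j) *\<^sub>R (A *v v j))"
        by (subst ex) (simp add: matrix_vector_sum matrix_vector_mult_scaleR)
      also have "\<dots> = (\<Sum>j\<in>J. ((x \<bullet> v j) * mu j) *\<^sub>R v j)"
        by (rule sum.cong) (auto simp: eigA J_def)
      finally have Ax2: "A *v x = (\<Sum>j\<in>J. ((x \<bullet> v j) * mu j) *\<^sub>R v j)" .
      have "x \<bullet> v k = 0" if kJ: "k \<in> J" for k
      proof -
        have "(A *v x) \<bullet> v k = (\<Sum>j\<in>J. ((x \<bullet> v j) * mu j) * (v j \<bullet> v k))"
          by (simp add: Ax2 inner_sum_left)
        also have "\<dots> = (\<Sum>j\<in>J. if j = k then (x \<bullet> v j) * mu j else 0)"
          by (rule sum.cong) (use kJ orth J_def in auto)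
        also have "\<dots> = (x \<bullet> v k) * mu k" using kJ J_def by simp
        finally have "m * (x \<bullet> v k) = (x \<bullet> v k) * mu k" by (simp add: Ax)
        moreover have "m \<noteq> mu k" using nm kJ by auto
        ultimately show ?thesis by (metis mult.commute mult_cancel_left)
      qed
      hence "x = 0" by (subst ex) simp
      with x0 show False by simp
    qed
  qed
  have fin: "finite (eigvals A)"
    using sub finite_surj J_def by blast
  have vk0: "v k \<noteq> 0" using orth[OF k k] by auto
  have mem: "mu k \<in> eigvals A" unfolding eigvals_def using vk0 eigA[OF k] by blast
  have "matfun f A *v v k = (\<Sum>m\<in>eigvals A. f m *\<^sub>R
      (prod_list (map (\<lambda>\<nu>. (mu k - \<nu>) / (m - \<nu>)) (sorted_list_of_set (eigvals A - {m}))) *\<^sub>R v k))"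
    unfolding matfun_def sum_matrix_vector
    by (simp add: scaleR_matrix_vector_assoc[symmetric] foldr_eigvec[OF eigA[OF k]])
  also have "\<dots> = (\<Sum>m\<in>eigvals A. if m = mu k then f m *\<^sub>R v k else 0)"
  proof (rule sum.cong[OF refl])
    fix m assume mA: "m \<in> eigvals A"
    show "f m *\<^sub>R (prod_list (map (\<lambda>\<nu>. (mu k - \<nu>) / (m - \<nu>)) (sorted_list_of_set (eigvals A - {m}))) *\<^sub>R v k)
      = (if m = mu k then f m *\<^sub>R v k else 0)"
    proof (cases "m = mu k")
      case True
      have eq: "map (\<lambda>\<nu>. (mu k - \<nu>) / (m - \<nu>)) (sorted_list_of_set (eigvals A - {m}))
          = map (\<lambda>_. 1) (sorted_list_of_set (eigvals A - {m}))"
        by (rule map_cong[OF refl]) (use fin True in auto)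
      have one: "prod_list (map (\<lambda>_. 1::real) L) = 1" for L :: "real list"
        by (induction L) auto
      show ?thesis unfolding eq one using True by simp
    next
      case False
      have "mu k \<in> set (sorted_list_of_set (eigvals A - {m}))" using fin mem False by simp
      hence "prod_list (map (\<lambda>\<nu>. (mu k - \<nu>) / (m - \<nu>)) (sorted_list_of_set (eigvals A - {m}))) = 0"
        by (subst prod_list_zero_iff) force
      then show ?thesis using False by simp
    qed
  qed
  also have "\<dots> = f (mu k) *\<^sub>R v k" using fin mem by (simp add: sum.delta')
  finally show ?thesis .
qed

lemma expect_quad:
  fixes M :: "'a measure" and eps :: "'a \<Rightarrow> real^'n" and u :: "real^'n"
    and sigma \<alpha> \<beta> :: real
  assumes M: "prob_space M"
    and eps_meas: "\<And>i. (\<lambda>\<omega>. eps \<omega> $ i) \<in> borel_measurable M"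
    and eps_indep: "prob_space.indep_vars M (\<lambda>_. borel) (\<lambda>i \<omega>. eps \<omega> $ i) UNIV"
    and eps_sq_int: "\<And>i. integrable M (\<lambda>\<omega>. (eps \<omega> $ i)\<^sup>2)"
    and eps_mean: "\<And>i. (\<integral>\<omega>. eps \<omega> $ i \<partial>M) = 0"
    and eps_var: "\<And>i. (\<integral>\<omega>. (eps \<omega> $ i)\<^sup>2 \<partial>M) = sigma\<^sup>2"
  shows "has_bochner_integral M (\<lambda>\<omega>. (\<alpha> + \<beta> * (eps \<omega> \<bullet> u))\<^sup>2) (\<alpha>\<^sup>2 + \<beta>\<^sup>2 * sigma\<^sup>2 * (u \<bullet> u))"
proof -
  interpret prob_space M by (rule M)
  have int1: "integrable M (\<lambda>\<omega>. eps \<omega> $ i)" for i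
    by (rule square_integrable_imp_integrable[OF eps_meas eps_sq_int])
  have hb1: "has_bochner_integral M (\<lambda>\<omega>. eps \<omega> $ i) 0" for i
    using int1 eps_mean by (simp add: has_bochner_integral_iff)
  have hb2: "has_bochner_integral M (\<lambda>\<omega>. eps \<omega> $ i * eps \<omega> $ k) (if i = k then sigma\<^sup>2 else 0)" for i k
  proof (cases "i = k")
    case True
    then show ?thesis using eps_sq_int[of i] eps_var[of i]
      by (simp add: has_bochner_integral_iff power2_eq_square)
  next
    case False
    have ind: "indep_vars (\<lambda>_. borel) (\<lambda>i \<omega>. eps \<omega> $ i) {i, k}"
      by (rule indep_vars_subset[OF eps_indep]) auto
    have "(\<integral>\<omega>. (\<Prod>l\<in>{i,k}. eps \<omega> $ l) \<partial>M) = (\<Prod>l\<in>{i,k}. \<integral>\<omega>. eps \<omega> $ l \<partial>M)"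
      by (rule indep_vars_lebesgue_integral[OF _ ind]) (auto intro: int1)
    moreover have "integrable M (\<lambda>\<omega>. (\<Prod>l\<in>{i,k}. eps \<omega> $ l))"
      by (rule indep_vars_integrable[OF _ ind]) (auto intro: int1)
    ultimately show ?thesis using False eps_mean
      by (simp add: has_bochner_integral_iff)
  qed
  have eq: "(\<alpha> + \<beta> * (eps \<omega> \<bullet> u))\<^sup>2 = \<alpha>\<^sup>2 + (2 * \<alpha> * \<beta>) * (\<Sum>i\<in>UNIV. u $ i * eps \<omega> $ i)
       + \<beta>\<^sup>2 * (\<Sum>i\<in>UNIV. \<Sum>k\<in>UNIV. (u $ i * u $ k) * (eps \<omega> $ i * eps \<omega> $ k))" for \<omega>
  proof -
    have e: "eps \<omega> \<bullet> u = (\<Sum>i\<in>UNIV. u $ i * eps \<omega> $ i)"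
      by (simp add: inner_vec_def mult.commute)
    have "(\<Sum>i\<in>UNIV. u $ i * eps \<omega> $ i)\<^sup>2 = (\<Sum>i\<in>UNIV. \<Sum>k\<in>UNIV. (u $ i * u $ k) * (eps \<omega> $ i * eps \<omega> $ k))"
      by (simp add: power2_eq_square sum_product mult_ac)
    then show ?thesis unfolding e by (simp add: power2_sum power_mult_distrib algebra_simps)
  qed
  have "has_bochner_integral M (\<lambda>\<omega>. \<alpha>\<^sup>2 + (2 * \<alpha> * \<beta>) * (\<Sum>i\<in>UNIV. u $ i * eps \<omega> $ i)
       + \<beta>\<^sup>2 * (\<Sum>i\<in>UNIV. \<Sum>k\<in>UNIV. (u $ i * u $ k) * (eps \<omega> $ i * eps \<omega> $ k)))
     (\<alpha>\<^sup>2 + (2 * \<alpha> * \<beta>) * (\<Sum>i\<in>UNIV. u $ i * 0)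
       + \<beta>\<^sup>2 * (\<Sum>i\<in>UNIV. \<Sum>k\<in>UNIV. (u $ i * u $ k) * (if i = k then sigma\<^sup>2 else 0)))"
    by (intro has_bochner_integral_add has_bochner_integral_mult_right has_bochner_integral_sum
        hb1 hb2) (simp add: has_bochner_integral_iff prob_space)
  moreover have "(\<Sum>i\<in>UNIV. \<Sum>k\<in>UNIV. (u $ i * u $ k) * (if i = k then sigma\<^sup>2 else (0::real)))
      = sigma\<^sup>2 * (u \<bullet> u)"
    by (simp add: if_distrib[of "\<lambda>z. _ * z"] inner_vec_def sum_distrib_left power2_eq_square mult_ac
        cong: if_cong)
  ultimately show ?thesis unfolding eq by (simp add: mult.assoc)
qed

lemma abel_nonpos:
  fixes w d :: "nat \<Rightarrow> real" and p :: nat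
  assumes mono: "\<And>i j. 1 \<le> i \<Longrightarrow> i \<le> j \<Longrightarrow> j \<le> p \<Longrightarrow> w i \<le> w j"
    and w1: "w 1 \<ge> 0"
    and tails: "\<And>i. i \<in> {1..p} \<Longrightarrow> (\<Sum>j=i..p. d j) \<le> 0"
  shows "(\<Sum>j=1..p. w j * d j) \<le> 0"
proof (cases "p = 0")
  case True then show ?thesis by simp
next
  case False
  have key: "(\<Sum>j=i..p. w j * d j) \<le> w i * (\<Sum>j=i..p. d j)" if "1 \<le> i" "i \<le> p" for i
    using that(2,1)
  proof (induction i rule: inc_induct)
    case base
    then show ?case by simp
  next
    case (step m)
    have "(\<Sum>j=m..p. w j * d j) = w m * d m + (\<Sum>j=Suc m..p. w j * d j)"
      using step.hyps by (simp add: sum.atLeast_Suc_atMost)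
    also have "\<dots> \<le> w m * d m + w (Suc m) * (\<Sum>j=Suc m..p. d j)"
      using step.IH step.prems by simp
    also have "\<dots> \<le> w m * d m + w m * (\<Sum>j=Suc m..p. d j)"
    proof -
      have "(\<Sum>j=Suc m..p. d j) \<le> 0" using tails step.hyps by simp
      moreover have "w m \<le> w (Suc m)" using mono step.hyps step.prems by simp
      ultimately show ?thesis by (simp add: mult_right_mono_neg)
    qed
    also have "\<dots> = w m * (\<Sum>j=m..p. d j)"
      using step.hyps by (simp add: sum.atLeast_Suc_atMost distrib_left)
    finally show ?case .
  qed
  have "(\<Sum>j=1..p. w j * d j) \<le> w 1 * (\<Sum>j=1..p. d j)" using key False by simp
  also have "\<dots> \<le> 0" using w1 tails[of 1] False by (simp add: mult_nonneg_nonpos)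
  finally show ?thesis .
qed

lemma matfun_inner:
  fixes A :: "real^'p^'p" and v :: "nat \<Rightarrow> real^'p" and mu :: "nat \<Rightarrow> real"
  assumes orth: "\<And>i j. i \<in> {1..CARD('p)} \<Longrightarrow> j \<in> {1..CARD('p)} \<Longrightarrow>
                 v i \<bullet> v j = (if i = j then 1 else 0)"
    and eigA: "\<And>j. j \<in> {1..CARD('p)} \<Longrightarrow> A *v v j = mu j *\<^sub>R v j"
    and k: "k \<in> {1..CARD('p)}"
  shows "(matfun f A *v x) \<bullet> v k = f (mu k) * (x \<bullet> v k)"
proof -
  have "matfun f A *v x = matfun f A *v (\<Sum>j\<in>{1..CARD('p)}. (x \<bullet> v j) *\<^sub>R v j)"
    by (rule arg_cong[OF orth_expand[OF orth]])
  also have "\<dots> = (\<Sum>j\<in>{1..CARD('p)}. (x \<bullet> v j) *\<^sub>R (matfun f A *v v j))"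
    by (simp add: matrix_vector_sum matrix_vector_mult_scaleR)
  also have "\<dots> = (\<Sum>j\<in>{1..CARD('p)}. ((x \<bullet> v j) * f (mu j)) *\<^sub>R v j)"
  proof (rule sum.cong[OF refl])
    fix j assume "j \<in> {1..CARD('p)}"
    then show "(x \<bullet> v j) *\<^sub>R (matfun f A *v v j) = ((x \<bullet> v j) * f (mu j)) *\<^sub>R v j"
      using matfun_eigvec[OF orth eigA] by simp
  qed
  finally have "(matfun f A *v x) \<bullet> v k = (\<Sum>j\<in>{1..CARD('p)}. ((x \<bullet> v j) * f (mu j)) * (v j \<bullet> v k))"
    by (simp add: inner_sum_left)
  also have "\<dots> = (\<Sum>j\<in>{1..CARD('p)}. if j = k then (x \<bullet> v j) * f (mu j) else 0)"
    by (rule sum.cong) (use k orth in auto)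
  also have "\<dots> = f (mu k) * (x \<bullet> v k)" using k by simp
  finally show ?thesis .
qed

lemma norm_sq_expand:
  fixes v :: "nat \<Rightarrow> real^'p"
  assumes orth: "\<And>i j. i \<in> {1..CARD('p)} \<Longrightarrow> j \<in> {1..CARD('p)} \<Longrightarrow>
                 v i \<bullet> v j = (if i = j then 1 else 0)"
  shows "(norm z)\<^sup>2 = (\<Sum>j\<in>{1..CARD('p)}. (z \<bullet> v j)\<^sup>2)"
proof -
  have "(norm z)\<^sup>2 = z \<bullet> z" by (simp add: power2_norm_eq_inner)
  also have "\<dots> = (\<Sum>j\<in>{1..CARD('p)}. (z \<bullet> v j) *\<^sub>R v j) \<bullet> z"
    by (rule arg_cong[where f="\<lambda>y. y \<bullet> z", OF orth_expand[OF orth]])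
  also have "\<dots> = (\<Sum>j\<in>{1..CARD('p)}. (z \<bullet> v j)\<^sup>2)"
    by (simp add: inner_sum_left power2_eq_square) (simp add: inner_commute)
  finally show ?thesis .
qed

lemma term_deriv:
  fixes s b lam sig nn :: real
  assumes "s + lam > 0" "nn > 0"
  shows "((\<lambda>t. (s + lam) * ((1 - exp (- t * (s + lam))) * s * b / (s + lam) - b)\<^sup>2
            + (1 - exp (- t * (s + lam)))\<^sup>2 * sig * s / (nn * (s + lam)))
     has_real_derivative
       (2 * exp (- t * (s + lam)) * s * (b\<^sup>2 * ((1 - exp (- t * (s + lam))) * s - (s + lam))
          + (1 - exp (- t * (s + lam))) * sig / nn))) (at t)"
proof -
  define a where "a = s + lam"
  have a: "a > 0" using assms a_def by simp
  define k where "k = s * b / a"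
  define c where "c = sig * s / (nn * a)"
  have dG: "((\<lambda>t. 1 - exp (- t * a)) has_real_derivative a * exp (- t * a)) (at t)"
    by (auto intro!: derivative_eq_intros)
  have dH: "((\<lambda>t. (1 - exp (- t * a)) * k - b) has_real_derivative a * exp (- t * a) * k) (at t)"
    by (auto intro!: derivative_eq_intros dG)
  have "((\<lambda>t. a * (((1 - exp (- t * a)) * k - b) * ((1 - exp (- t * a)) * k - b))
            + ((1 - exp (- t * a)) * (1 - exp (- t * a))) * c)
     has_real_derivative
       a * (a * exp (- t * a) * k * ((1 - exp (- t * a)) * k - b) + a * exp (- t * a) * k * ((1 - exp (- t * a)) * k - b))
       + (a * exp (- t * a) * (1 - exp (- t * a)) + a * exp (- t * a) * (1 - exp (- t * a))) * c) (at t)"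
    by (intro DERIV_add DERIV_cmult DERIV_cmult_right DERIV_mult dH dG)
  moreover have "a * (a * exp (- t * a) * k * ((1 - exp (- t * a)) * k - b) + a * exp (- t * a) * k * ((1 - exp (- t * a)) * k - b))
       + (a * exp (- t * a) * (1 - exp (- t * a)) + a * exp (- t * a) * (1 - exp (- t * a))) * c
     = 2 * exp (- t * a) * s * (b\<^sup>2 * ((1 - exp (- t * a)) * s - a)
          + (1 - exp (- t * a)) * sig / nn)"
    using a assms(2) unfolding k_def c_def by (simp add: field_simps power2_eq_square)
  moreover have "(\<lambda>t. a * (((1 - exp (- t * a)) * k - b) * ((1 - exp (- t * a)) * k - b))
            + ((1 - exp (- t * a)) * (1 - exp (- t * a))) * c)
     = (\<lambda>t. a * ((1 - exp (- t * a)) * s * b / a - b)\<^sup>2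
            + (1 - exp (- t * a))\<^sup>2 * sig * s / (nn * a))"
    unfolding k_def c_def by (simp add: power2_eq_square mult.assoc)
  ultimately show ?thesis unfolding a_def by simp
qed
lemma risk_mono:
  fixes s b :: "nat \<Rightarrow> real" and p :: nat and lam sig nn t1 t2 :: real
  assumes s0: "\<And>j. j \<in> {1..p} \<Longrightarrow> s j \<ge> 0"
    and sorted: "\<And>i j. 1 \<le> i \<Longrightarrow> i \<le> j \<Longrightarrow> j \<le> p \<Longrightarrow> s j \<le> s i"
    and lam: "lam > 0" and nn: "nn > 0" and sig: "sig \<ge> 0"
    and cond: "\<And>i. i \<in> {1..p} \<Longrightarrow> lam * (\<Sum>j=i..p. s j * (b j)\<^sup>2) \<ge> sig / nn * (\<Sum>j=i..p. s j)"
    and t: "0 \<le> t1" "t1 \<le> t2"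
  shows "(\<Sum>j=1..p. (s j + lam) * ((1 - exp (- t2 * (s j + lam))) * s j * b j / (s j + lam) - b j)\<^sup>2
            + (1 - exp (- t2 * (s j + lam)))\<^sup>2 * sig * s j / (nn * (s j + lam)))
       \<le> (\<Sum>j=1..p. (s j + lam) * ((1 - exp (- t1 * (s j + lam))) * s j * b j / (s j + lam) - b j)\<^sup>2
            + (1 - exp (- t1 * (s j + lam)))\<^sup>2 * sig * s j / (nn * (s j + lam)))"
proof -
  define D where "D x j = 2 * exp (- x * (s j + lam)) * s j * ((b j)\<^sup>2 * ((1 - exp (- x * (s j + lam))) * s j - (s j + lam))
          + (1 - exp (- x * (s j + lam))) * sig / nn)" for x j
  show ?thesis
  proof (rule DERIV_nonpos_imp_nonincreasing[OF t(2)])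
    fix x assume x: "t1 \<le> x" "x \<le> t2"
    have der: "((\<lambda>t. \<Sum>j=1..p. (s j + lam) * ((1 - exp (- t * (s j + lam))) * s j * b j / (s j + lam) - b j)\<^sup>2
            + (1 - exp (- t * (s j + lam)))\<^sup>2 * sig * s j / (nn * (s j + lam))) has_real_derivative
            (\<Sum>j=1..p. D x j)) (at x)"
      unfolding D_def
      by (rule DERIV_sum, rule term_deriv) (use s0 lam nn in \<open>auto simp: add_nonneg_pos\<close>)
    have le: "D x j \<le> (2 * exp (- x * (s j + lam))) * (s j * (sig / nn - lam * (b j)\<^sup>2))" if j: "j \<in> {1..p}" for j
    proof -
      define e where "e = exp (- x * (s j + lam))"
      have e0: "e > 0" unfolding e_def by simp
      have sj: "s j \<ge> 0" using s0 j by simp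
      have "(b j)\<^sup>2 * ((1 - e) * s j - (s j + lam)) + (1 - e) * sig / nn
          = sig / nn - lam * (b j)\<^sup>2 - e * (s j * (b j)\<^sup>2) - e * (sig / nn)"
        by (simp add: algebra_simps diff_divide_distrib)
      also have "\<dots> \<le> sig / nn - lam * (b j)\<^sup>2"
      proof -
        have "e * (s j * (b j)\<^sup>2) \<ge> 0" using e0 sj by simp
        moreover have "e * (sig / nn) \<ge> 0" using e0 sig nn by simp
        ultimately show ?thesis by linarith
      qed
      finally have inner: "(b j)\<^sup>2 * ((1 - e) * s j - (s j + lam)) + (1 - e) * sig / nn \<le> sig / nn - lam * (b j)\<^sup>2" .
      have "D x j = (2 * e * s j) * ((b j)\<^sup>2 * ((1 - e) * s j - (s j + lam)) + (1 - e) * sig / nn)"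
        unfolding D_def e_def by simp
      also have "\<dots> \<le> (2 * e * s j) * (sig / nn - lam * (b j)\<^sup>2)"
        by (rule mult_left_mono[OF inner]) (use e0 sj in simp)
      finally show ?thesis unfolding e_def by (simp add: mult_ac)
    qed
    have "(\<Sum>j=1..p. D x j) \<le> (\<Sum>j=1..p. (2 * exp (- x * (s j + lam))) * (s j * (sig / nn - lam * (b j)\<^sup>2)))"
      by (rule sum_mono) (use le in auto)
    also have "\<dots> \<le> 0"
    proof (rule abel_nonpos)
      fix i j :: nat assume ij: "1 \<le> i" "i \<le> j" "j \<le> p"
      have "s j \<le> s i" using sorted ij by simp
      hence "- x * (s i + lam) \<le> - x * (s j + lam)" using x t by (simp add: mult_left_mono)
      thus "2 * exp (- x * (s i + lam)) \<le> 2 * exp (- x * (s j + lam))" by simp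
    next
      show "0 \<le> 2 * exp (- x * (s 1 + lam))" by simp
    next
      fix i assume i: "i \<in> {1..p}"
      have "(\<Sum>j=i..p. s j * (sig / nn - lam * (b j)\<^sup>2))
          = sig / nn * (\<Sum>j=i..p. s j) - lam * (\<Sum>j=i..p. s j * (b j)\<^sup>2)"
        by (simp add: sum_distrib_left sum_subtractf algebra_simps)
      also have "\<dots> \<le> 0" using cond[OF i] by simp
      finally show "(\<Sum>j=i..p. s j * (sig / nn - lam * (b j)\<^sup>2)) \<le> 0" .
    qed
    finally show "\<exists>y. ((\<lambda>t. \<Sum>j=1..p. (s j + lam) * ((1 - exp (- t * (s j + lam))) * s j * b j / (s j + lam) - b j)\<^sup>2
            + (1 - exp (- t * (s j + lam)))\<^sup>2 * sig * s j / (nn * (s j + lam))) has_real_derivative y) (at x) \<and> y \<le> 0"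
      using der by blast
  qed
qed

lemma alg_term:
  fixes a nn X G sg s :: real
  assumes "a > 0" "nn > 0"
  shows "(sqrt a * X)\<^sup>2 + (sqrt a * G / (nn * a))\<^sup>2 * sg * (nn * s) = a * X\<^sup>2 + G\<^sup>2 * sg * s / (nn * a)"
proof -
  have "(sqrt a * X)\<^sup>2 = a * X\<^sup>2" using assms by (simp add: power_mult_distrib)
  moreover have "(sqrt a * G / (nn * a))\<^sup>2 = a * G\<^sup>2 / (nn * a)\<^sup>2"
    using assms by (simp add: power_mult_distrib power_divide)
  moreover have "a * G\<^sup>2 / (nn * a)\<^sup>2 * sg * (nn * s) = G\<^sup>2 * sg * s / (nn * a)"
    using assms by (simp add: field_simps power2_eq_square)
  ultimately show ?thesis by simp
qed

theorem proposition3p11: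
  fixes X :: "real^'p^'n" and beta0 :: "real^'p" and sigma lam :: real
    and M :: "'a measure" and eps :: "'a \<Rightarrow> real^'n"
    and s :: "nat \<Rightarrow> real" and v :: "nat \<Rightarrow> real^'p"
  assumes M: "prob_space M"
    and eps_meas: "\<And>i. (\<lambda>\<omega>. eps \<omega> $ i) \<in> borel_measurable M"
    and eps_indep: "prob_space.indep_vars M (\<lambda>_. borel) (\<lambda>i \<omega>. eps \<omega> $ i) UNIV"
    and eps_sq_int: "\<And>i. integrable M (\<lambda>\<omega>. (eps \<omega> $ i)\<^sup>2)"
    and eps_mean: "\<And>i. (\<integral>\<omega>. eps \<omega> $ i \<partial>M) = 0"
    and eps_var: "\<And>i. (\<integral>\<omega>. (eps \<omega> $ i)\<^sup>2 \<partial>M) = sigma\<^sup>2"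
    and sigma_pos: "sigma > 0"
    and beta0_row: "\<exists>w. beta0 = transpose X *v w"
    and eig: "\<And>j. j \<in> {1..CARD('p)} \<Longrightarrow> Sigma_hat X *v v j = s j *\<^sub>R v j"
    and orth: "\<And>i j. i \<in> {1..CARD('p)} \<Longrightarrow> j \<in> {1..CARD('p)} \<Longrightarrow>
                 v i \<bullet> v j = (if i = j then 1 else 0)"
    and sorted: "\<And>i j. 1 \<le> i \<Longrightarrow> i \<le> j \<Longrightarrow> j \<le> CARD('p) \<Longrightarrow> s j \<le> s i"
    and lam_pos: "lam > 0"
    and cond: "\<And>i. i \<in> {1..CARD('p)} \<Longrightarrow>
        lam * (\<Sum>j=i..CARD('p). s j * (beta0 \<bullet> v j)\<^sup>2)
          \<ge> sigma\<^sup>2 / real CARD('n) * (\<Sum>j=i..CARD('p). s j)"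
  shows "\<forall>t1 t2. 0 \<le> t1 \<longrightarrow> t1 \<le> t2 \<longrightarrow>
           risk_in M X lam beta0 (\<lambda>\<omega>. beta_GF X lam t2 (X *v beta0 + eps \<omega>))
         \<le> risk_in M X lam beta0 (\<lambda>\<omega>. beta_GF X lam t1 (X *v beta0 + eps \<omega>))"
proof -
  define J where "J = {1..CARD('p)}"
  define nn where "nn = real CARD('n)"
  define A where "A = Sigma_lam X lam"
  define b where "b j = beta0 \<bullet> v j" for j
  define u where "u j = X *v v j" for j
  have nn: "nn > 0" unfolding nn_def by simp
  have eigA: "A *v v j = (s j + lam) *\<^sub>R v j" if "j \<in> {1..CARD('p)}" for j
    unfolding A_def Sigma_lam_def
    by (simp add: matrix_vector_mult_add_rdistrib scaleR_matrix_vector_assoc[symmetric] eig[OF that]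
        algebra_simps)
  have XtX: "(transpose X ** X) *v w = nn *\<^sub>R (Sigma_hat X *v w)" for w
    unfolding Sigma_hat_def nn_def using nn nn_def
    by (simp add: scaleR_matrix_vector_assoc[symmetric])
  have tr: "(transpose X *v y) \<bullet> w = y \<bullet> (X *v w)" for y :: "real^'n" and w
    by (simp add: dot_lmul_matrix)
  have XX: "transpose X *v (X *v v j) = (nn * s j) *\<^sub>R v j" if "j \<in> J" for j
    using that XtX[of "v j"] eig[of j] by (simp add: J_def matrix_vector_mul_assoc)
  have vv: "v j \<bullet> v j = 1" if "j \<in> J" for j using orth that J_def by simp
  have uu: "u j \<bullet> u j = nn * s j" if "j \<in> J" for j
  proof -
    have "u j \<bullet> u j = (transpose X *v (X *v v j)) \<bullet> v j" unfolding u_def by (simp only: tr)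
    also have "\<dots> = nn * s j" using XX[OF that] vv[OF that] by simp
    finally show ?thesis .
  qed
  have s0: "s j \<ge> 0" if "j \<in> {1..CARD('p)}" for j
  proof -
    have "0 \<le> u j \<bullet> u j" by simp
    moreover have "u j \<bullet> u j = nn * s j" using uu[of j] that J_def by simp
    ultimately have "0 \<le> nn * s j" by simp
    then show ?thesis using nn by (simp add: zero_le_mult_iff)
  qed
  have a0: "s j + lam > 0" if "j \<in> {1..CARD('p)}" for j using s0[OF that] lam_pos by simp
  have Xy: "(transpose X *v (X *v beta0 + eps \<omega>)) \<bullet> v j = nn * s j * b j + eps \<omega> \<bullet> u j"
    if "j \<in> J" for j \<omega>
  proof -
    have "(transpose X *v (X *v beta0 + eps \<omega>)) \<bullet> v j = (X *v beta0) \<bullet> u j + eps \<omega> \<bullet> u j"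
      unfolding u_def tr by (simp only: inner_add_left)
    also have "(X *v beta0) \<bullet> u j = (transpose X *v (X *v v j)) \<bullet> beta0"
      unfolding u_def tr by (rule inner_commute)
    also have "\<dots> = nn * s j * b j" using XX[OF that] unfolding b_def by (simp add: inner_commute)
    finally show ?thesis .
  qed
  define al where "al t j = sqrt (s j + lam) * ((1 - exp (- t * (s j + lam))) * s j * b j / (s j + lam) - b j)" for t j
  define be where "be t j = sqrt (s j + lam) * (1 - exp (- t * (s j + lam))) / (nn * (s j + lam))" for t j
  have coord: "(matfun sqrt A *v (beta_GF X lam t (X *v beta0 + eps \<omega>) - beta0)) \<bullet> v j
      = al t j + be t j * (eps \<omega> \<bullet> u j)" if j: "j \<in> J" for t \<omega> j
  proof -
    have jj: "j \<in> {1..CARD('p)}" using j J_def by simp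
    have mi: "(matfun f A *v x) \<bullet> v j = f (s j + lam) * (x \<bullet> v j)" for f x
      by (rule matfun_inner[where mu="\<lambda>j. s j + lam"]) (use orth eigA jj in auto)
    define E where "E = eps \<omega> \<bullet> u j"
    define a where "a = s j + lam"
    have a: "a > 0" using a0[OF jj] a_def by simp
    have ylam: "y_lam X lam (X *v beta0 + eps \<omega>) \<bullet> v j = (1 / nn) * (1 / sqrt a) * (nn * s j * b j + E)"
      unfolding y_lam_def A_def[symmetric] nn_def[symmetric] inner_scaleR_left mi Xy[OF j]
      by (simp add: E_def a_def)
    have "beta_GF X lam t (X *v beta0 + eps \<omega>) \<bullet> v j
        = (1 / sqrt a) * ((1 - exp (- t * a)) * ((1 / nn) * (1 / sqrt a) * (nn * s j * b j + E)))"
      unfolding beta_GF_def A_def[symmetric] mi matrix_vector_mult_diff_rdistrib matrix_vector_mul_lid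
        inner_diff_left ylam a_def
      by (simp only: left_diff_distrib mult_1)
    hence "(matfun sqrt A *v (beta_GF X lam t (X *v beta0 + eps \<omega>) - beta0)) \<bullet> v j
        = sqrt a * ((1 / sqrt a) * ((1 - exp (- t * a)) * ((1 / nn) * (1 / sqrt a) * (nn * s j * b j + E))) - b j)"
      unfolding mi inner_diff_left b_def a_def by simp
    also have "\<dots> = al t j + be t j * E"
    proof -
      have sa: "sqrt a * sqrt a = a" using a by simp
      have sa0: "sqrt a > 0" using a by simp
      show ?thesis unfolding al_def be_def a_def[symmetric]
        using sa sa0 a nn by (simp add: field_simps)
    qed
    finally show ?thesis unfolding E_def .
  qed
  define R where "R t = (\<Sum>j=1..CARD('p). (s j + lam) * ((1 - exp (- t * (s j + lam))) * s j * b j / (s j + lam) - b j)\<^sup>2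
            + (1 - exp (- t * (s j + lam)))\<^sup>2 * sigma\<^sup>2 * s j / (nn * (s j + lam)))" for t
  have riskR: "risk_in M X lam beta0 (\<lambda>\<omega>. beta_GF X lam t (X *v beta0 + eps \<omega>)) = R t" for t
  proof -
    have "has_bochner_integral M (\<lambda>\<omega>. (norm (matfun sqrt (Sigma_lam X lam) *v (beta_GF X lam t (X *v beta0 + eps \<omega>) - beta0)))\<^sup>2)
        (\<Sum>j\<in>J. (al t j)\<^sup>2 + (be t j)\<^sup>2 * sigma\<^sup>2 * (u j \<bullet> u j))"
    proof -
      have "has_bochner_integral M (\<lambda>\<omega>. \<Sum>j\<in>J. (al t j + be t j * (eps \<omega> \<bullet> u j))\<^sup>2)
        (\<Sum>j\<in>J. (al t j)\<^sup>2 + (be t j)\<^sup>2 * sigma\<^sup>2 * (u j \<bullet> u j))"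
        by (rule has_bochner_integral_sum, rule expect_quad[OF M eps_meas eps_indep eps_sq_int eps_mean eps_var])
      moreover have "(norm (matfun sqrt (Sigma_lam X lam) *v (beta_GF X lam t (X *v beta0 + eps \<omega>) - beta0)))\<^sup>2
          = (\<Sum>j\<in>J. (al t j + be t j * (eps \<omega> \<bullet> u j))\<^sup>2)" for \<omega>
      proof -
        have "(norm (matfun sqrt A *v (beta_GF X lam t (X *v beta0 + eps \<omega>) - beta0)))\<^sup>2
           = (\<Sum>j\<in>J. ((matfun sqrt A *v (beta_GF X lam t (X *v beta0 + eps \<omega>) - beta0)) \<bullet> v j)\<^sup>2)"
          unfolding J_def by (rule norm_sq_expand) (use orth in auto)
        also have "\<dots> = (\<Sum>j\<in>J. (al t j + be t j * (eps \<omega> \<bullet> u j))\<^sup>2)"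
          by (rule sum.cong[OF refl]) (simp add: coord)
        finally show ?thesis unfolding A_def .
      qed
      ultimately show ?thesis by simp
    qed
    hence "risk_in M X lam beta0 (\<lambda>\<omega>. beta_GF X lam t (X *v beta0 + eps \<omega>))
       = (\<Sum>j\<in>J. (al t j)\<^sup>2 + (be t j)\<^sup>2 * sigma\<^sup>2 * (u j \<bullet> u j))"
      unfolding risk_in_def by (simp add: has_bochner_integral_iff)
    also have "\<dots> = R t"
      unfolding R_def J_def
    proof (rule sum.cong[OF refl])
      fix j assume j: "j \<in> {1..CARD('p)}"
      have a: "s j + lam > 0" using a0[OF j] .
      have sa: "(sqrt (s j + lam))\<^sup>2 = s j + lam" using a by simp
      show "(al t j)\<^sup>2 + (be t j)\<^sup>2 * sigma\<^sup>2 * (u j \<bullet> u j) =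
         (s j + lam) * ((1 - exp (- t * (s j + lam))) * s j * b j / (s j + lam) - b j)\<^sup>2
            + (1 - exp (- t * (s j + lam)))\<^sup>2 * sigma\<^sup>2 * s j / (nn * (s j + lam))"
        unfolding al_def be_def uu[OF j[folded J_def]]
        by (rule alg_term[OF a nn])
    qed
    finally show ?thesis .
  qed
  show ?thesis
  proof (intro allI impI)
    fix t1 t2 :: real assume t: "0 \<le> t1" "t1 \<le> t2"
    have "R t2 \<le> R t1" unfolding R_def
      by (rule risk_mono[OF s0 sorted lam_pos nn _ _ t])
         (use cond in \<open>simp_all add: b_def nn_def\<close>)
    then show "risk_in M X lam beta0 (\<lambda>\<omega>. beta_GF X lam t2 (X *v beta0 + eps \<omega>))
         \<le> risk_in M X lam beta0 (\<lambda>\<omega>. beta_GF X lam t1 (X *v beta0 + eps \<omega>))"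
      by (simp add: riskR)
  qed
qed

end
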